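(* The functor $F$ is strong monoidal from the monoidal category $(\mathbf{Perm}\text{-}\mathbf{Nom},\otimes,1)$ to $(\mathbf{Sb}\text{-}\mathbf{Nom},\times,1)$. In particular, for all nominal $\mathrm{Perm}$-sets $X,Y$, the map $p=\langle F(\pi_1),F(\pi_2)\rangle\colon F(X\otimes Y)\to F(X)\times F(Y)$, i.e. $p([m,(x,y)])=([m,x],[m,y])$, is an isomorphism of nominal $\mathrm{Sb}$-sets, natural in $X$ and $Y$.
   Context: Let $\mathbb{A}$ be a countably infinite set of atoms; $\mathrm{Sb}$ is the monoid of functions $\mathbb{A}\to\mathbb{A}$ moving only finitely many atoms (under composition), $\mathrm{Perm}\subseteq\mathrm{Sb}$ the group of bijections in it. For $M\in\{\mathrm{Sb},\mathrm{Perm}\}$, an $M$-set is a set with a monoid action; $C\subseteq\mathbb{A}$ is an $M$-support of $x$ if $m_1|_C=m_2|_C$ implies $m_1x=m_2x$ for $m_1,m_2\in M$; nominal $M$-sets are $M$-sets whose elements all have finite supports; $M\text{-}\mathbf{Nom}$ is the category of nominal $M$-sets with equivariant maps. Products in $M\text{-}\mathbf{Nom}$ are Cartesian products with pointwise action, and $1$ is a singleton. Two elements $x,y$ of nominal $\mathrm{Perm}$-sets are separated, written $x\perp y$, if they have disjoint $\mathrm{Perm}$-supports; the separated product is $X\otimes Y=\{(x,y)\in X\times Y\mid x\perp y\}$ with pointwise action, and $\pi_1,\pi_2$ are the projections. For a nominal $\mathrm{Perm}$-set $X$, $F(X)$ is $\mathrm{Sb}\times X$ modulo the least equivalence relation $\sim$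 containing $(m,gx)\sim(mg,x)$ ($g\in\mathrm{Perm}$) and $(m,x)\sim(m',x)$ whenever $m|_C=m'|_C$ for some $\mathrm{Perm}$-support $C$ of $x$; classes are written $[m,x]$, with action $n\cdot[m,x]=[nm,x]$, and $F(f)([m,x])=[m,f(x)]$. This $F$ is a functor $\mathbf{Perm}\text{-}\mathbf{Nom}\to\mathbf{Sb}\text{-}\mathbf{Nom}$. *)

theory Defs
  imports Main "HOL-Library.Countable"
begin

text \<open>Atoms are the elements of a type 'a (assumed countable and infinite in the theorem).
  Substitutions are functions 'a => 'a moving finitely many atoms.\<close>

definition Sb :: "('a \<Rightarrow> 'a) set" where
  "Sb = {m. finite {a. m a \<noteq> a}}"

definition Perm :: "('a \<Rightarrow> 'a) set" where
  "Perm = {g \<in> Sb. bij g}"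

definition is_Mset :: "('a \<Rightarrow> 'a) set \<Rightarrow> 'x set \<Rightarrow> (('a \<Rightarrow> 'a) \<Rightarrow> 'x \<Rightarrow> 'x) \<Rightarrow> bool" where
  "is_Mset M X act \<longleftrightarrow>
     (\<forall>m\<in>M. \<forall>x\<in>X. act m x \<in> X) \<and> (\<forall>x\<in>X. act id x = x) \<and>
     (\<forall>m1\<in>M. \<forall>m2\<in>M. \<forall>x\<in>X. act (m1 \<circ> m2) x = act m1 (act m2 x))"

definition is_support :: "('a \<Rightarrow> 'a) set \<Rightarrow> (('a \<Rightarrow> 'a) \<Rightarrow> 'x \<Rightarrow> 'x) \<Rightarrow> 'a set \<Rightarrow> 'x \<Rightarrow> bool" where
  "is_support M act C x \<longleftrightarrow>
     (\<forall>m1\<in>M. \<forall>m2\<in>M. (\<forall>a\<in>C. m1 a = m2 a) \<longrightarrow> act m1 x = act m2 x)"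

definition nominal :: "('a \<Rightarrow> 'a) set \<Rightarrow> 'x set \<Rightarrow> (('a \<Rightarrow> 'a) \<Rightarrow> 'x \<Rightarrow> 'x) \<Rightarrow> bool" where
  "nominal M X act \<longleftrightarrow> is_Mset M X act \<and> (\<forall>x\<in>X. \<exists>C. finite C \<and> is_support M act C x)"

definition equivariant :: "('a \<Rightarrow> 'a) set \<Rightarrow> 'x set \<Rightarrow> (('a \<Rightarrow> 'a) \<Rightarrow> 'x \<Rightarrow> 'x)
    \<Rightarrow> 'y set \<Rightarrow> (('a \<Rightarrow> 'a) \<Rightarrow> 'y \<Rightarrow> 'y) \<Rightarrow> ('x \<Rightarrow> 'y) \<Rightarrow> bool" where
  "equivariant M X actX Y actY f \<longleftrightarrow>
     (\<forall>x\<in>X. f x \<in> Y) \<and> (\<forall>m\<in>M. \<forall>x\<in>X. f (actX m x) = actY m (f x))"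

definition prod_act :: "('m \<Rightarrow> 'x \<Rightarrow> 'x) \<Rightarrow> ('m \<Rightarrow> 'y \<Rightarrow> 'y) \<Rightarrow> 'm \<Rightarrow> 'x \<times> 'y \<Rightarrow> 'x \<times> 'y" where
  "prod_act actX actY m = (\<lambda>(x, y). (actX m x, actY m y))"

definition separated :: "(('a \<Rightarrow> 'a) \<Rightarrow> 'x \<Rightarrow> 'x) \<Rightarrow> (('a \<Rightarrow> 'a) \<Rightarrow> 'y \<Rightarrow> 'y) \<Rightarrow> 'x \<Rightarrow> 'y \<Rightarrow> bool" where
  "separated actX actY x y \<longleftrightarrow>
     (\<exists>C D. finite C \<and> finite D \<and> C \<inter> D = {} \<and> is_support Perm actX C x \<and> is_support Perm actY D y)"

definition sep_prod :: "'x set \<Rightarrow> (('a \<Rightarrow> 'a) \<Rightarrow> 'x \<Rightarrow> 'x) \<Rightarrow> 'y set \<Rightarrow> (('a \<Rightarrow> 'a) \<Rightarrow> 'y \<Rightarrow> 'y) \<Rightarrow> ('x \<times> 'y) set" where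
  "sep_prod X actX Y actY = {(x, y). x \<in> X \<and> y \<in> Y \<and> separated actX actY x y}"

text \<open>The least equivalence relation on Sb x X generated by the two clauses defining F.\<close>
inductive_set F_rel :: "'x set \<Rightarrow> (('a \<Rightarrow> 'a) \<Rightarrow> 'x \<Rightarrow> 'x) \<Rightarrow> ((('a \<Rightarrow> 'a) \<times> 'x) \<times> (('a \<Rightarrow> 'a) \<times> 'x)) set"
  for X :: "'x set" and act :: "('a \<Rightarrow> 'a) \<Rightarrow> 'x \<Rightarrow> 'x" where
  F_refl: "m \<in> Sb \<Longrightarrow> x \<in> X \<Longrightarrow> ((m, x), (m, x)) \<in> F_rel X act"
| F_perm: "m \<in> Sb \<Longrightarrow> g \<in> Perm \<Longrightarrow> x \<in> X \<Longrightarrow> ((m, act g x), (m \<circ> g, x)) \<in> F_rel X act"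
| F_supp: "m \<in> Sb \<Longrightarrow> m' \<in> Sb \<Longrightarrow> x \<in> X \<Longrightarrow> finite C \<Longrightarrow> is_support Perm act C x \<Longrightarrow>
             (\<forall>a\<in>C. m a = m' a) \<Longrightarrow> ((m, x), (m', x)) \<in> F_rel X act"
| F_sym: "(p, q) \<in> F_rel X act \<Longrightarrow> (q, p) \<in> F_rel X act"
| F_trans: "(p, q) \<in> F_rel X act \<Longrightarrow> (q, r) \<in> F_rel X act \<Longrightarrow> (p, r) \<in> F_rel X act"

definition F_set :: "'x set \<Rightarrow> (('a \<Rightarrow> 'a) \<Rightarrow> 'x \<Rightarrow> 'x) \<Rightarrow> (('a \<Rightarrow> 'a) \<times> 'x) set set" where
  "F_set X act = (Sb \<times> X) // F_rel X act"

definition F_cls :: "'x set \<Rightarrow> (('a \<Rightarrow> 'a) \<Rightarrow> 'x \<Rightarrow> 'x) \<Rightarrow> ('a \<Rightarrow> 'a) \<Rightarrow> 'x \<Rightarrow> (('a \<Rightarrow> 'a) \<times> 'x) set" where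
  "F_cls X act m x = F_rel X act `` {(m, x)}"

definition F_act :: "'x set \<Rightarrow> (('a \<Rightarrow> 'a) \<Rightarrow> 'x \<Rightarrow> 'x) \<Rightarrow> ('a \<Rightarrow> 'a) \<Rightarrow> (('a \<Rightarrow> 'a) \<times> 'x) set \<Rightarrow> (('a \<Rightarrow> 'a) \<times> 'x) set" where
  "F_act X act n c = (let (m, x) = (SOME p. p \<in> c) in F_cls X act (n \<circ> m) x)"

text \<open>F(f)[m,x] = [m, f x]; the first two arguments are the target Perm-set.\<close>
definition F_map :: "'y set \<Rightarrow> (('a \<Rightarrow> 'a) \<Rightarrow> 'y \<Rightarrow> 'y) \<Rightarrow> ('x \<Rightarrow> 'y) \<Rightarrow> (('a \<Rightarrow> 'a) \<times> 'x) set \<Rightarrow> (('a \<Rightarrow> 'a) \<times> 'y) set" where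
  "F_map Y actY f c = (let (m, x) = (SOME p. p \<in> c) in F_cls Y actY m (f x))"

definition p_map :: "'x set \<Rightarrow> (('a \<Rightarrow> 'a) \<Rightarrow> 'x \<Rightarrow> 'x) \<Rightarrow> 'y set \<Rightarrow> (('a \<Rightarrow> 'a) \<Rightarrow> 'y \<Rightarrow> 'y)
    \<Rightarrow> (('a \<Rightarrow> 'a) \<times> ('x \<times> 'y)) set \<Rightarrow> (('a \<Rightarrow> 'a) \<times> 'x) set \<times> (('a \<Rightarrow> 'a) \<times> 'y) set" where
  "p_map X actX Y actY c = (F_map X actX fst c, F_map Y actY snd c)"

end

theory Submission
  imports Defs
begin

lemma Sb_id: "id \<in> Sb" by (simp add: Sb_def)

lemma Sb_comp: assumes "m \<in> Sb" "n \<in> Sb" shows "m \<circ> n \<in> Sb"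
proof -
  have "{a. (m \<circ> n) a \<noteq> a} \<subseteq> {a. n a \<noteq> a} \<union> {a. m a \<noteq> a}" by auto
  then show ?thesis using assms unfolding Sb_def by (auto intro: finite_subset)
qed

lemma Perm_Sb: "g \<in> Perm \<Longrightarrow> g \<in> Sb" by (simp add: Perm_def)
lemma Perm_bij: "g \<in> Perm \<Longrightarrow> bij g" by (simp add: Perm_def)
lemma Perm_id: "id \<in> Perm" by (simp add: Perm_def Sb_id)
lemma Perm_comp: "g \<in> Perm \<Longrightarrow> h \<in> Perm \<Longrightarrow> g \<circ> h \<in> Perm"
  by (simp add: Perm_def Sb_comp bij_comp)

lemma Perm_inv: assumes "g \<in> Perm" shows "inv g \<in> Perm"
proof -
  have b: "bij g" using assms by (simp add: Perm_def)
  have gi: "g (inv g a) = a" for a using b by (simp add: bij_is_surj surj_f_inv_f)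
  have ig: "inv g (g a) = a" for a using b by (simp add: bij_is_inj)
  have "{a. inv g a \<noteq> a} \<subseteq> g ` {a. g a \<noteq> a}"
  proof
    fix a assume "a \<in> {a. inv g a \<noteq> a}"
    then have "inv g a \<noteq> g (inv g a)" using gi by simp
    then have "inv g a \<in> {a. g a \<noteq> a}" by simp
    then show "a \<in> g ` {a. g a \<noteq> a}" using gi by (metis image_eqI)
  qed
  then have "finite {a. inv g a \<noteq> a}" using assms by (auto simp: Perm_def Sb_def intro: finite_subset)
  then show ?thesis using b by (simp add: Perm_def Sb_def bij_imp_bij_inv)
qed

lemma Perm_inv_l: "g \<in> Perm \<Longrightarrow> inv g \<circ> g = id"
  using Perm_bij bij_is_inj inv_o_cancel by blast
lemma Perm_inv_r: "g \<in> Perm \<Longrightarrow> g \<circ> inv g = id"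
  by (rule surj_iff[THEN iffD1, OF bij_is_surj[OF Perm_bij]])
lemma Perm_inv_r': "g \<in> Perm \<Longrightarrow> g (inv g a) = a"
  using Perm_bij bij_is_surj surj_f_inv_f by metis
lemma Perm_inv_l': "g \<in> Perm \<Longrightarrow> inv g (g a) = a"
  using Perm_bij bij_is_inj inv_f_f by metis

lemma Mset_in: "is_Mset M X act \<Longrightarrow> m \<in> M \<Longrightarrow> x \<in> X \<Longrightarrow> act m x \<in> X"
  by (simp add: is_Mset_def)
lemma Mset_id: "is_Mset M X act \<Longrightarrow> x \<in> X \<Longrightarrow> act id x = x"
  by (simp add: is_Mset_def)
lemma Mset_comp: "is_Mset M X act \<Longrightarrow> m1 \<in> M \<Longrightarrow> m2 \<in> M \<Longrightarrow> x \<in> X \<Longrightarrow> act (m1 \<circ> m2) x = act m1 (act m2 x)"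
  by (simp add: is_Mset_def)

lemma Mset_inv: "is_Mset Perm X act \<Longrightarrow> g \<in> Perm \<Longrightarrow> x \<in> X \<Longrightarrow> act (inv g) (act g x) = x"
proof -
  assume a: "is_Mset Perm X act" "g \<in> Perm" "x \<in> X"
  have "act (inv g) (act g x) = act (inv g \<circ> g) x" using a by (simp add: Mset_comp Perm_inv)
  also have "\<dots> = x" using a by (simp add: Perm_inv_l Mset_id)
  finally show ?thesis .
qed

lemma extend_perm:
  assumes fin: "finite S" and inj: "inj_on f S"
  shows "\<exists>k\<in>Perm. \<forall>a\<in>S. k a = f a"
proof -
  define T where "T = f ` S"
  have finT: "finite T" using fin by (simp add: T_def)
  have cT: "card T = card S" using inj by (simp add: T_def card_image)
  have c1: "card (T - S) = card T - card (T \<inter> S)"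
    by (rule card_Diff_subset_Int) (simp add: finT)
  have c2: "card (S - T) = card S - card (S \<inter> T)"
    by (rule card_Diff_subset_Int) (simp add: fin)
  have "card (T - S) = card (S - T)" using c1 c2 cT by (simp add: Int_commute)
  moreover have "finite (T - S)" "finite (S - T)" using fin finT by simp_all
  ultimately obtain \<phi> where phi: "bij_betw \<phi> (T - S) (S - T)"
    using finite_same_card_bij by metis
  have phiS: "\<phi> a \<in> S - T" if "a \<in> T - S" for a
    using phi that bij_betwE by blast
  have phiI: "\<phi> a = \<phi> b \<Longrightarrow> a \<in> T - S \<Longrightarrow> b \<in> T - S \<Longrightarrow> a = b" for a b
    using phi by (meson bij_betw_imp_inj_on inj_onD)
  define k where "k a = (if a \<in> S then f a else if a \<in> T - S then \<phi> a else a)" for a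
  have kS1: "a \<in> S \<Longrightarrow> k a \<in> T" for a by (simp add: k_def T_def)
  have kS2: "a \<notin> S \<Longrightarrow> a \<in> T \<Longrightarrow> k a \<in> S - T" for a using phiS by (simp add: k_def)
  have out: "a \<notin> S \<union> T \<Longrightarrow> k a = a" for a by (simp add: k_def)
  have kS: "k ` (S \<union> T) \<subseteq> S \<union> T"
  proof
    fix y assume "y \<in> k ` (S \<union> T)"
    then obtain a where a: "a \<in> S \<union> T" "y = k a" by blast
    then show "y \<in> S \<union> T" using kS1 kS2 by (cases "a \<in> S") auto
  qed
  have ki: "inj_on k (S \<union> T)"
  proof (rule inj_onI)
    fix a b assume a: "a \<in> S \<union> T" and b: "b \<in> S \<union> T" and e: "k a = k b"
    show "a = b"
    proof (cases "a \<in> S")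
      case True
      show ?thesis
      proof (cases "b \<in> S")
        case True
        then have "f a = f b" using \<open>a \<in> S\<close> e by (simp add: k_def)
        then show ?thesis using \<open>a \<in> S\<close> True inj inj_onD by metis
      next
        case False
        then have "k b \<in> S - T" using b kS2 by blast
        moreover have "k a \<in> T" using True kS1 by blast
        ultimately show ?thesis using e by simp
      qed
    next
      case False
      then have aT: "a \<in> T - S" using a by blast
      then have kaT: "k a \<in> S - T" using False kS2 by blast
      show ?thesis
      proof (cases "b \<in> S")
        case True
        then have "k b \<in> T" using kS1 by blast
        then show ?thesis using e kaT by simp
      next
        case False
        then have bT: "b \<in> T - S" using b by blast
        have "\<phi> a = \<phi> b" using e aT bT by (simp add: k_def)
        then show ?thesis using phiI aT bT by blast
      qed
    qed
  qed
  have surjST: "k ` (S \<union> T) = S \<union> T" using endo_inj_surj[OF _ kS ki] fin finT by simp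
  have "inj k"
  proof (rule injI)
    fix a b assume e: "k a = k b"
    show "a = b"
    proof (cases "a \<in> S \<union> T")
      case True
      show ?thesis
      proof (cases "b \<in> S \<union> T")
        case True
        then show ?thesis using \<open>a \<in> S \<union> T\<close> ki e inj_onD by metis
      next
        case False
        then have "k b = b" using out by blast
        moreover have "k a \<in> S \<union> T" using kS True by blast
        ultimately show ?thesis using e False by simp
      qed
    next
      case False
      then have ka: "k a = a" using out by blast
      show ?thesis
      proof (cases "b \<in> S \<union> T")
        case True
        then have "k b \<in> S \<union> T" using kS by blast
        then show ?thesis using e ka False by simp
      next
        case False
        then show ?thesis using e ka out by simp
      qed
    qed
  qed
  moreover have "surj k"
  proof -
    have "y \<in> range k" for y
    proof (cases "y \<in> S \<union> T")
      case True
      then have "y \<in> k ` (S \<union> T)" using surjST by simp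
      then show ?thesis by blast
    next
      case False
      then have "k y = y" using out by blast
      then show ?thesis by (metis rangeI)
    qed
    then show ?thesis by blast
  qed
  moreover have "finite {a. k a \<noteq> a}"
  proof (rule finite_subset)
    show "{a. k a \<noteq> a} \<subseteq> S \<union> T" using out by blast
    show "finite (S \<union> T)" using fin finT by simp
  qed
  ultimately have "k \<in> Perm" by (simp add: Perm_def Sb_def bij_def)
  moreover have "\<forall>a\<in>S. k a = f a" by (simp add: k_def)
  ultimately show ?thesis by blast
qed

lemma fresh_perm:
  assumes inf: "infinite (UNIV :: 'a set)" and fA: "finite (A :: 'a set)" and fB: "finite B" and fE: "finite E"
  shows "\<exists>\<tau>\<in>Perm. (\<forall>a\<in>A. \<tau> a = a) \<and> (\<forall>b\<in>B - A. \<tau> b \<notin> E)"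
proof -
  have "finite (E \<union> A \<union> B)" using fA fB fE by simp
  then have "infinite (- (E \<union> A \<union> B))" using inf by (metis Compl_partition2 finite_UnI)
  then obtain F where F: "finite F" "card F = card (B - A)" "F \<subseteq> - (E \<union> A \<union> B)"
    using infinite_arbitrarily_large by blast
  have "finite (B - A)" using fB by simp
  then obtain \<phi> where phi: "bij_betw \<phi> (B - A) F"
    using finite_same_card_bij F(1,2) by metis
  have phiF: "\<phi> a \<in> F" if "a \<in> B - A" for a using phi that bij_betwE by blast
  have phiI: "\<phi> a = \<phi> b \<Longrightarrow> a \<in> B - A \<Longrightarrow> b \<in> B - A \<Longrightarrow> a = b" for a b
    using phi by (meson bij_betw_imp_inj_on inj_onD)
  have nAE: "c \<notin> A \<and> c \<notin> E" if "c \<in> F" for c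
  proof -
    have "c \<in> - (E \<union> A \<union> B)" using F(3) that by (rule subsetD)
    then show ?thesis by simp
  qed
  have nA: "c \<notin> A" if "c \<in> F" for c using nAE that by blast
  define f where "f a = (if a \<in> B - A then \<phi> a else a)" for a
  have "inj_on f (A \<union> (B - A))"
  proof (rule inj_onI)
    fix a b assume a: "a \<in> A \<union> (B - A)" and b: "b \<in> A \<union> (B - A)" and e: "f a = f b"
    show "a = b"
    proof (cases "a \<in> B - A")
      case True
      then have fa: "f a \<in> F" using phiF by (simp add: f_def)
      show ?thesis
      proof (cases "b \<in> B - A")
        case True
        then show ?thesis using \<open>a \<in> B - A\<close> e phiI by (simp add: f_def)
      next
        case False
        then have "f b \<in> A" using b False by (auto simp: f_def)
        then show ?thesis using fa e nA by metis
      qed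
    next
      case False
      then have fa: "f a \<in> A" using a False by (auto simp: f_def)
      show ?thesis
      proof (cases "b \<in> B - A")
        case True
        then have "f b \<in> F" using phiF by (simp add: f_def)
        then show ?thesis using fa e nA by metis
      next
        case False
        then have "f b = b" by (auto simp: f_def)
        moreover have "f a = a" using \<open>a \<notin> B - A\<close> by (auto simp: f_def)
        ultimately show ?thesis using e by simp
      qed
    qed
  qed
  moreover have "finite (A \<union> (B - A))" using fA fB by simp
  ultimately obtain k where k: "k \<in> Perm" "\<forall>a\<in>A \<union> (B - A). k a = f a"
    using extend_perm by blast
  have "\<forall>a\<in>A. k a = a" using k(2) by (simp add: f_def)
  moreover have "\<forall>b\<in>B - A. k b \<notin> E"
  proof
    fix b assume b: "b \<in> B - A"
    then have "k b = \<phi> b" using k(2) by (simp add: f_def)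
    then show "k b \<notin> E" using phiF[OF b] nAE by simp
  qed
  ultimately show ?thesis using k(1) by blast
qed

lemma is_supportD:
  assumes "is_support M act C x" "m1 \<in> M" "m2 \<in> M" "\<And>a. a \<in> C \<Longrightarrow> m1 a = m2 a"
  shows "act m1 x = act m2 x"
  using assms unfolding is_support_def by blast

lemma support_fix:
  assumes "is_support Perm act C x" "\<pi> \<in> Perm" "\<forall>a\<in>C. \<pi> a = a" "is_Mset Perm X act" "x \<in> X"
  shows "act \<pi> x = x"
proof -
  have "act \<pi> x = act id x" using is_supportD[OF assms(1,2) Perm_id] assms(3) by simp
  then show ?thesis using Mset_id[OF assms(4,5)] by simp
qed

lemma support_by_fix:
  assumes M: "is_Mset Perm X act" and x: "x \<in> X"
    and fx: "\<And>\<pi>. \<pi> \<in> Perm \<Longrightarrow> \<forall>a\<in>C. \<pi> a = a \<Longrightarrow> act \<pi> x = x"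
  shows "is_support Perm act C x"
  unfolding is_support_def
proof (intro ballI impI)
  fix m1 m2 assume m1: "m1 \<in> Perm" and m2: "m2 \<in> Perm" and ag: "\<forall>a\<in>C. m1 a = m2 a"
  define \<pi> where "\<pi> = inv m2 \<circ> m1"
  have pP: "\<pi> \<in> Perm" using m1 m2 by (simp add: \<pi>_def Perm_comp Perm_inv)
  have pC: "\<forall>a\<in>C. \<pi> a = a" using ag m2 by (simp add: \<pi>_def Perm_inv_l')
  have "m2 \<circ> \<pi> = (m2 \<circ> inv m2) \<circ> m1" by (simp add: \<pi>_def comp_assoc)
  also have "\<dots> = m1" using m2 by (simp add: Perm_inv_r)
  finally have e: "m2 \<circ> \<pi> = m1" .
  have "act m1 x = act m2 (act \<pi> x)" using Mset_comp[OF M m2 pP x] e by simp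
  also have "\<dots> = act m2 x" using fx[OF pP pC] by simp
  finally show "act m1 x = act m2 x" .
qed

lemma support_transport:
  assumes M: "is_Mset Perm X act" and x: "x \<in> X" and g: "g \<in> Perm" and s: "is_support Perm act C x"
  shows "is_support Perm act (g ` C) (act g x)"
  unfolding is_support_def
proof (intro ballI impI)
  fix m1 m2 assume m1: "m1 \<in> Perm" and m2: "m2 \<in> Perm" and ag: "\<forall>a\<in>g ` C. m1 a = m2 a"
  have "\<forall>a\<in>C. (m1 \<circ> g) a = (m2 \<circ> g) a" using ag by simp
  then have "act (m1 \<circ> g) x = act (m2 \<circ> g) x" using is_supportD[OF s Perm_comp[OF m1 g] Perm_comp[OF m2 g]] by blast
  then show "act m1 (act g x) = act m2 (act g x)" by (simp add: Mset_comp[OF M m1 g x] Mset_comp[OF M m2 g x])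
qed

lemma support_inter:
  assumes inf: "infinite (UNIV :: 'a set)" and M: "is_Mset Perm X (act :: ('a \<Rightarrow> 'a) \<Rightarrow> 'x \<Rightarrow> 'x)"
    and x: "x \<in> X" and fC: "finite C" and fD: "finite D"
    and sC: "is_support Perm act C x" and sD: "is_support Perm act D x"
  shows "is_support Perm act (C \<inter> D) x"
proof (rule support_by_fix[OF M x])
  fix \<pi> :: "'a \<Rightarrow> 'a" assume p: "\<pi> \<in> Perm" and pf: "\<forall>a\<in>C \<inter> D. \<pi> a = a"
  have fm: "finite {a. \<pi> a \<noteq> a}" using p by (simp add: Perm_def Sb_def)
  obtain \<tau> where t: "\<tau> \<in> Perm" "\<forall>a\<in>C. \<tau> a = a" "\<forall>b\<in>D - C. \<tau> b \<notin> C \<union> D \<union> {a. \<pi> a \<noteq> a}"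
    using fresh_perm[OF inf fC fD, of "C \<union> D \<union> {a. \<pi> a \<noteq> a}"] fC fD fm by auto
  have tx: "act \<tau> x = x" using support_fix[OF sC t(1) t(2) M x] .
  have s2: "is_support Perm act (\<tau> ` D) x" using support_transport[OF M x t(1) sD] tx by simp
  have "\<forall>a\<in>\<tau> ` D. \<pi> a = a"
  proof
    fix a assume "a \<in> \<tau> ` D"
    then obtain d where d: "d \<in> D" "a = \<tau> d" by blast
    show "\<pi> a = a"
    proof (cases "d \<in> C")
      case True
      then have "a = d" using d t(2) by simp
      then show ?thesis using pf d True by simp
    next
      case False
      then have "\<tau> d \<notin> {a. \<pi> a \<noteq> a}" using t(3) d by blast
      then show ?thesis using d by simp
    qed
  qed
  then show "act \<pi> x = x" using support_fix[OF s2 p _ M x] by simp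
qed

lemma pair_support:
  "is_support Perm (prod_act aX aY) C (x, y) \<longleftrightarrow> is_support Perm aX C x \<and> is_support Perm aY C y"
  unfolding is_support_def prod_act_def by auto

definition supp :: "(('a \<Rightarrow> 'a) \<Rightarrow> 'x \<Rightarrow> 'x) \<Rightarrow> 'x \<Rightarrow> 'a set" where
  "supp act x = (SOME C. finite C \<and> is_support Perm act C x \<and>
      (\<forall>D. finite D \<and> is_support Perm act D x \<longrightarrow> C \<subseteq> D))"

lemma supp_ex:
  assumes inf: "infinite (UNIV :: 'a set)" and N: "nominal Perm X (act :: ('a \<Rightarrow> 'a) \<Rightarrow> 'x \<Rightarrow> 'x)" and x: "x \<in> X"
  shows "\<exists>C. finite C \<and> is_support Perm act C x \<and> (\<forall>D. finite D \<and> is_support Perm act D x \<longrightarrow> C \<subseteq> D)"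
proof -
  have M: "is_Mset Perm X act" using N by (simp add: nominal_def)
  obtain C0 where "finite C0" "is_support Perm act C0 x" using N x by (auto simp: nominal_def)
  then obtain C where C: "finite C \<and> is_support Perm act C x"
    and min: "\<forall>D. finite D \<and> is_support Perm act D x \<longrightarrow> card C \<le> card D"
    using ex_has_least_nat[of "\<lambda>C. finite C \<and> is_support Perm act C x" C0 card] by blast
  have "C \<subseteq> D" if D: "finite D" "is_support Perm act D x" for D
  proof -
    have "is_support Perm act (C \<inter> D) x" using support_inter[OF inf M x] C D by blast
    then have "card C \<le> card (C \<inter> D)" using min C by simp
    then have "C \<inter> D = C" using C by (meson card_seteq inf_le1 finite_Int)
    then show ?thesis by blast
  qed
  then show ?thesis using C by blast
qed

lemma supp_props:
  assumes inf: "infinite (UNIV :: 'a set)" and N: "nominal Perm X (act :: ('a \<Rightarrow> 'a) \<Rightarrow> 'x \<Rightarrow> 'x)" and x: "x \<in> X"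
  shows "finite (supp act x)" "is_support Perm act (supp act x) x"
    "\<And>D. finite D \<Longrightarrow> is_support Perm act D x \<Longrightarrow> supp act x \<subseteq> D"
  using someI_ex[OF supp_ex[OF inf N x]] unfolding supp_def by blast+

lemma supp_perm:
  assumes inf: "infinite (UNIV :: 'a set)" and N: "nominal Perm X (act :: ('a \<Rightarrow> 'a) \<Rightarrow> 'x \<Rightarrow> 'x)" and x: "x \<in> X"
    and g: "g \<in> Perm"
  shows "supp act (act g x) = g ` supp act x"
proof -
  have M: "is_Mset Perm X act" using N by (simp add: nominal_def)
  have gx: "act g x \<in> X" using Mset_in[OF M g x] .
  have s1: "is_support Perm act (g ` supp act x) (act g x)"
    using support_transport[OF M x g supp_props(2)[OF inf N x]] .
  have a: "supp act (act g x) \<subseteq> g ` supp act x"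
    using supp_props(3)[OF inf N gx _ s1] supp_props(1)[OF inf N x] by simp
  have s2: "is_support Perm act (inv g ` supp act (act g x)) x"
    using support_transport[OF M gx Perm_inv[OF g] supp_props(2)[OF inf N gx]] Mset_inv[OF M g x] by simp
  have "supp act x \<subseteq> inv g ` supp act (act g x)"
    using supp_props(3)[OF inf N x _ s2] supp_props(1)[OF inf N gx] by simp
  then have "g ` supp act x \<subseteq> g ` inv g ` supp act (act g x)" by (rule image_mono)
  also have "\<dots> = supp act (act g x)" using g by (simp add: image_comp Perm_inv_r)
  finally show ?thesis using a by blast
qed

lemma supp_sep:
  assumes inf: "infinite (UNIV :: 'a set)" and NX: "nominal Perm X (aX :: ('a \<Rightarrow> 'a) \<Rightarrow> 'x \<Rightarrow> 'x)"
    and NY: "nominal Perm Y (aY :: ('a \<Rightarrow> 'a) \<Rightarrow> 'y \<Rightarrow> 'y)" and x: "x \<in> X" and y: "y \<in> Y"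
  shows "separated aX aY x y \<longleftrightarrow> supp aX x \<inter> supp aY y = {}"
proof
  assume "separated aX aY x y"
  then obtain C D where "finite C" "finite D" "C \<inter> D = {}" "is_support Perm aX C x" "is_support Perm aY D y"
    unfolding separated_def by blast
  then show "supp aX x \<inter> supp aY y = {}"
    using supp_props(3)[OF inf NX x] supp_props(3)[OF inf NY y] by blast
next
  assume "supp aX x \<inter> supp aY y = {}"
  then show "separated aX aY x y" unfolding separated_def
    using supp_props(1,2)[OF inf NX x] supp_props(1,2)[OF inf NY y] by blast
qed

lemma F_rel_dom:
  assumes M: "is_Mset Perm X act" and r: "(p, q) \<in> F_rel X act"
  shows "p \<in> Sb \<times> X \<and> q \<in> Sb \<times> X"
  using r
proof (induction rule: F_rel.induct)
  case (F_refl m x) then show ?case by simp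
next
  case (F_perm m g x)
  then show ?case using Mset_in[OF M F_perm(2,3)] Sb_comp[OF F_perm(1) Perm_Sb[OF F_perm(2)]] by simp
next
  case (F_supp m m' x C) then show ?case by simp
next
  case (F_sym p q) then show ?case by simp
next
  case (F_trans p q r) then show ?case by simp
qed

lemma equiv_F:
  assumes M: "is_Mset Perm X act"
  shows "equiv (Sb \<times> X) (F_rel X act)"
proof (rule equivI)
  show "F_rel X act \<subseteq> (Sb \<times> X) \<times> (Sb \<times> X)" using F_rel_dom[OF M] by auto
  show "refl_on (Sb \<times> X) (F_rel X act)" unfolding refl_on_def using F_rel.F_refl by auto
  show "sym (F_rel X act)" by (rule symI) (rule F_rel.F_sym)
  show "trans (F_rel X act)" by (rule transI) (rule F_rel.F_trans)
qed

lemma F_cls_eq: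
  assumes M: "is_Mset Perm X act" and "((m, x), (m', x')) \<in> F_rel X act"
  shows "F_cls X act m x = F_cls X act m' x'"
  unfolding F_cls_def using equiv_class_eq[OF equiv_F[OF M] assms(2)] .

lemma F_cls_eq_iff:
  assumes M: "is_Mset Perm X act" and "m \<in> Sb" "m' \<in> Sb" "x \<in> X" "x' \<in> X"
  shows "F_cls X act m x = F_cls X act m' x' \<longleftrightarrow> ((m, x), (m', x')) \<in> F_rel X act"
  unfolding F_cls_def using eq_equiv_class_iff[OF equiv_F[OF M]] assms by simp

lemma F_set_iff: "c \<in> F_set X act \<longleftrightarrow> (\<exists>m\<in>Sb. \<exists>x\<in>X. c = F_cls X act m x)"
  unfolding F_set_def quotient_def F_cls_def by blast

lemma F_cls_in: "m \<in> Sb \<Longrightarrow> x \<in> X \<Longrightarrow> F_cls X act m x \<in> F_set X act"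
  using F_set_iff by blast

lemma F_some:
  assumes "m \<in> Sb" "x \<in> X"
  shows "((m, x), (SOME p. p \<in> F_cls X act m x)) \<in> F_rel X act"
proof -
  have "(m, x) \<in> F_cls X act m x" unfolding F_cls_def using F_rel.F_refl[OF assms] by simp
  then have "(SOME p. p \<in> F_cls X act m x) \<in> F_cls X act m x" by (rule someI)
  then show ?thesis unfolding F_cls_def by simp
qed

lemma equivariantD1: "equivariant M X aX Y aY h \<Longrightarrow> x \<in> X \<Longrightarrow> h x \<in> Y"
  unfolding equivariant_def by blast
lemma equivariantD2: "equivariant M X aX Y aY h \<Longrightarrow> m \<in> M \<Longrightarrow> x \<in> X \<Longrightarrow> h (aX m x) = aY m (h x)"
  unfolding equivariant_def by blast

lemma equivariant_support:
  assumes e: "equivariant Perm X aX Y aY h" and x: "x \<in> X" and s: "is_support Perm aX C x"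
  shows "is_support Perm aY C (h x)"
  unfolding is_support_def
proof (intro ballI impI)
  fix m1 m2 assume m: "m1 \<in> Perm" "m2 \<in> Perm" and ag: "\<forall>a\<in>C. m1 a = m2 a"
  have "aX m1 x = aX m2 x" using is_supportD[OF s m] ag by blast
  then show "aY m1 (h x) = aY m2 (h x)" using equivariantD2[OF e _ x] m by metis
qed

lemma F_rel_map:
  assumes e: "equivariant Perm X aX Y aY h" and r: "(p, q) \<in> F_rel X aX"
  shows "((fst p, h (snd p)), (fst q, h (snd q))) \<in> F_rel Y aY"
  using r
proof (induction rule: F_rel.induct)
  case (F_refl m x) then show ?case using F_rel.F_refl[where act=aY, OF F_refl(1) equivariantD1[OF e F_refl(2)]] by simp
next
  case (F_perm m g x)
  have "h (aX g x) = aY g (h x)" using equivariantD2[OF e F_perm(2,3)] .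
  then show ?case using F_rel.F_perm[where act=aY, OF F_perm(1,2) equivariantD1[OF e F_perm(3)]] by (simp add: comp_def)
next
  case (F_supp m m' x C)
  then show ?case using F_rel.F_supp[where act=aY, OF F_supp(1,2) equivariantD1[OF e F_supp(3)] F_supp(4)
      equivariant_support[OF e F_supp(3,5)] F_supp(6)] by simp
next
  case (F_sym p q) then show ?case using F_rel.F_sym by blast
next
  case (F_trans p q r) then show ?case using F_rel.F_trans by blast
qed

lemma F_map_cls:
  assumes MY: "is_Mset Perm Y aY" and e: "equivariant Perm X aX Y aY h" and m: "m \<in> Sb" and x: "x \<in> X"
  shows "F_map Y aY h (F_cls X aX m x) = F_cls Y aY m (h x)"
proof -
  obtain m0 x0 where s: "(SOME p. p \<in> F_cls X aX m x) = (m0, x0)" by (metis surj_pair)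
  have "((m, x), (m0, x0)) \<in> F_rel X aX" using F_some[OF m x, of aX] s by simp
  then have "((m, h x), (m0, h x0)) \<in> F_rel Y aY" using F_rel_map[OF e] by fastforce
  then have "F_cls Y aY m (h x) = F_cls Y aY m0 (h x0)" by (rule F_cls_eq[OF MY])
  then show ?thesis unfolding F_map_def s by simp
qed

lemma F_rel_left:
  assumes n: "n \<in> Sb" and r: "(p, q) \<in> F_rel X act"
  shows "((n \<circ> fst p, snd p), (n \<circ> fst q, snd q)) \<in> F_rel X act"
  using r
proof (induction rule: F_rel.induct)
  case (F_refl m x) then show ?case using F_rel.F_refl[where act=act, OF Sb_comp[OF n F_refl(1)] F_refl(2)] by (simp add: comp_def)
next
  case (F_perm m g x)
  have "n \<circ> (m \<circ> g) = (n \<circ> m) \<circ> g" by (simp add: comp_assoc)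
  then show ?case using F_rel.F_perm[where act=act, OF Sb_comp[OF n F_perm(1)] F_perm(2,3)] by (simp add: comp_def)
next
  case (F_supp m m' x C)
  have "\<forall>a\<in>C. (n \<circ> m) a = (n \<circ> m') a" using F_supp(6) by simp
  then show ?case using F_rel.F_supp[where act=act, OF Sb_comp[OF n F_supp(1)] Sb_comp[OF n F_supp(2)] F_supp(3,4,5)] by (simp add: comp_def)
next
  case (F_sym p q) then show ?case using F_rel.F_sym by blast
next
  case (F_trans p q r) then show ?case using F_rel.F_trans by blast
qed

lemma F_act_cls:
  assumes M: "is_Mset Perm X act" and n: "n \<in> Sb" and m: "m \<in> Sb" and x: "x \<in> X"
  shows "F_act X act n (F_cls X act m x) = F_cls X act (n \<circ> m) x"
proof -
  obtain m0 x0 where s: "(SOME p. p \<in> F_cls X act m x) = (m0, x0)" by (metis surj_pair)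
  have "((m, x), (m0, x0)) \<in> F_rel X act" using F_some[OF m x, of act] s by simp
  then have "((n \<circ> m, x), (n \<circ> m0, x0)) \<in> F_rel X act" using F_rel_left[OF n] by fastforce
  then have "F_cls X act (n \<circ> m) x = F_cls X act (n \<circ> m0) x0" by (rule F_cls_eq[OF M])
  then show ?thesis unfolding F_act_def s by simp
qed

lemma sep_Mset:
  fixes aX :: "('a \<Rightarrow> 'a) \<Rightarrow> 'x \<Rightarrow> 'x" and aY :: "('a \<Rightarrow> 'a) \<Rightarrow> 'y \<Rightarrow> 'y"
  assumes MX: "is_Mset Perm X aX" and MY: "is_Mset Perm Y aY"
  shows "is_Mset Perm (sep_prod X aX Y aY) (prod_act aX aY)"
  unfolding is_Mset_def
proof (intro conjI ballI)
  fix g :: "'a \<Rightarrow> 'a" and p assume g: "g \<in> Perm" and p: "p \<in> sep_prod X aX Y aY"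
  obtain x y where xy: "p = (x, y)" by (metis surj_pair)
  have x: "x \<in> X" and y: "y \<in> Y" and s: "separated aX aY x y" using p xy by (auto simp: sep_prod_def)
  obtain C D where CD: "finite C" "finite D" "C \<inter> D = {}" "is_support Perm aX C x" "is_support Perm aY D y"
    using s unfolding separated_def by blast
  have "g ` C \<inter> g ` D = {}" using CD(3) bij_is_inj[OF Perm_bij[OF g]] by (simp add: image_Int[symmetric])
  then have "separated aX aY (aX g x) (aY g y)" unfolding separated_def
    using support_transport[OF MX x g CD(4)] support_transport[OF MY y g CD(5)] CD(1,2) by blast
  then show "prod_act aX aY g p \<in> sep_prod X aX Y aY"
    using Mset_in[OF MX g x] Mset_in[OF MY g y] xy by (simp add: sep_prod_def prod_act_def)
next
  fix p assume p: "p \<in> sep_prod X aX Y aY"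
  then show "prod_act aX aY id p = p" using Mset_id[OF MX] Mset_id[OF MY]
    by (auto simp: sep_prod_def prod_act_def)
next
  fix m1 m2 :: "'a \<Rightarrow> 'a" and p assume m: "m1 \<in> Perm" "m2 \<in> Perm" and p: "p \<in> sep_prod X aX Y aY"
  then show "prod_act aX aY (m1 \<circ> m2) p = prod_act aX aY m1 (prod_act aX aY m2 p)"
    using Mset_comp[OF MX m] Mset_comp[OF MY m] by (auto simp: sep_prod_def prod_act_def)
qed

lemma equivariant_fst: "equivariant Perm (sep_prod X aX Y aY) (prod_act aX aY) X aX fst"
  unfolding equivariant_def by (auto simp: sep_prod_def prod_act_def)
lemma equivariant_snd: "equivariant Perm (sep_prod X aX Y aY) (prod_act aX aY) Y aY snd"
  unfolding equivariant_def by (auto simp: sep_prod_def prod_act_def)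

lemma p_map_cls:
  assumes MX: "is_Mset Perm X aX" and MY: "is_Mset Perm Y aY" and m: "m \<in> Sb"
    and p: "(x, y) \<in> sep_prod X aX Y aY"
  shows "p_map X aX Y aY (F_cls (sep_prod X aX Y aY) (prod_act aX aY) m (x, y)) = (F_cls X aX m x, F_cls Y aY m y)"
  unfolding p_map_def using F_map_cls[OF MX equivariant_fst m p] F_map_cls[OF MY equivariant_snd m p] by simp

lemma support_mono: "is_support M act C x \<Longrightarrow> C \<subseteq> D \<Longrightarrow> is_support M act D x"
  unfolding is_support_def by blast

lemma F_rel_S:
  assumes inf: "infinite (UNIV :: 'a set)" and N: "nominal Perm X (act :: ('a \<Rightarrow> 'a) \<Rightarrow> 'x \<Rightarrow> 'x)"
    and r: "(p, q) \<in> F_rel X act"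
  shows "\<exists>g\<in>Perm. snd q = act g (snd p) \<and> (\<forall>a\<in>supp act (snd p). fst p a = fst q (g a))"
  using r
proof (induction rule: F_rel.induct)
  have M: "is_Mset Perm X act" using N by (simp add: nominal_def)
  {
  case (F_refl m x)
  have "snd (m, x) = act id (snd (m, x))" using Mset_id[OF M F_refl(2)] by simp
  moreover have "\<forall>a\<in>supp act (snd (m, x)). fst (m, x) a = fst (m, x) (id a)" by simp
  ultimately show ?case using Perm_id by blast
next
  case (F_perm m g x)
  have "x = act (inv g) (act g x)" using Mset_inv[OF M F_perm(2,3)] by simp
  moreover have "\<forall>a. m a = (m \<circ> g) (inv g a)" using Perm_inv_r'[OF F_perm(2)] by simp
  ultimately show ?case using Perm_inv[OF F_perm(2)] by auto
next
  case (F_supp m m' x C)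
  have "supp act x \<subseteq> C" using supp_props(3)[OF inf N F_supp(3,4,5)] .
  moreover have "snd (m', x) = act id (snd (m, x))" using Mset_id[OF M F_supp(3)] by simp
  moreover have "\<forall>a\<in>supp act (snd (m, x)). fst (m, x) a = fst (m', x) (id a)" using F_supp(6) \<open>supp act x \<subseteq> C\<close> by auto
  ultimately show ?case using Perm_id by blast
next
  case (F_sym p q)
  then obtain g where g: "g \<in> Perm" "snd q = act g (snd p)" "\<forall>a\<in>supp act (snd p). fst p a = fst q (g a)"
    by blast
  have pX: "snd p \<in> X" using F_rel_dom[OF M F_sym(1)] by auto
  have "snd p = act (inv g) (snd q)" using g(2) Mset_inv[OF M g(1) pX] by simp
  moreover have "\<forall>b\<in>supp act (snd q). fst q b = fst p (inv g b)"
  proof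
    fix b assume "b \<in> supp act (snd q)"
    then have "b \<in> g ` supp act (snd p)" using supp_perm[OF inf N pX g(1)] g(2) by simp
    then obtain a where a: "a \<in> supp act (snd p)" "b = g a" by blast
    then show "fst q b = fst p (inv g b)" using g(3) Perm_inv_l'[OF g(1)] by simp
  qed
  ultimately show ?case using Perm_inv[OF g(1)] by blast
next
  case (F_trans p q r)
  then obtain g where g: "g \<in> Perm" "snd q = act g (snd p)" "\<forall>a\<in>supp act (snd p). fst p a = fst q (g a)"
    by blast
  obtain h where h: "h \<in> Perm" "snd r = act h (snd q)" "\<forall>a\<in>supp act (snd q). fst q a = fst r (h a)"
    using F_trans by blast
  have pX: "snd p \<in> X" using F_rel_dom[OF M F_trans(1)] by auto
  have "snd r = act (h \<circ> g) (snd p)" using h(2) g(2) Mset_comp[OF M h(1) g(1) pX] by simp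
  moreover have "\<forall>a\<in>supp act (snd p). fst p a = fst r ((h \<circ> g) a)"
  proof
    fix a assume a: "a \<in> supp act (snd p)"
    then have "g a \<in> supp act (snd q)" using supp_perm[OF inf N pX g(1)] g(2) by simp
    then show "fst p a = fst r ((h \<circ> g) a)" using g(3) h(3) a by simp
  qed
  ultimately show ?case using Perm_comp[OF h(1) g(1)] by blast
  }
qed

lemma unit_part: "\<exists>z. F_set ({()} :: unit set) (\<lambda>(_ :: 'a \<Rightarrow> 'a) u. u) = {z}"
proof -
  define act where "act = (\<lambda>(_ :: 'a \<Rightarrow> 'a) (u :: unit). u)"
  have M: "is_Mset Perm {()} act" unfolding is_Mset_def act_def by simp
  have s: "is_support Perm act {} ()" unfolding is_support_def act_def by simp
  have "F_set {()} act = {F_cls {()} act id ()}"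
  proof
    show "F_set {()} act \<subseteq> {F_cls {()} act id ()}"
    proof
      fix c assume "c \<in> F_set {()} act"
      then obtain m where m: "m \<in> Sb" "c = F_cls {()} act m ()" unfolding F_set_iff by blast
      have "((m, ()), (id, ())) \<in> F_rel {()} act"
        by (rule F_rel.F_supp[OF m(1) Sb_id _ _ s]) simp_all
      then have "F_cls {()} act m () = F_cls {()} act id ()" by (rule F_cls_eq[OF M])
      then show "c \<in> {F_cls {()} act id ()}" using m(2) by simp
    qed
    have "F_cls {()} act id () \<in> F_set {()} act" by (rule F_cls_in[OF Sb_id]) simp
    then show "{F_cls {()} act id ()} \<subseteq> F_set {()} act" by simp
  qed
  then show ?thesis unfolding act_def by blast
qed

lemma surj_part:
  fixes aX :: "('a \<Rightarrow> 'a) \<Rightarrow> 'x \<Rightarrow> 'x" and aY :: "('a \<Rightarrow> 'a) \<Rightarrow> 'y \<Rightarrow> 'y"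
  assumes inf: "infinite (UNIV :: 'a set)" and NX: "nominal Perm X aX" and NY: "nominal Perm Y aY"
    and c1: "c1 \<in> F_set X aX" and c2: "c2 \<in> F_set Y aY"
  shows "(c1, c2) \<in> p_map X aX Y aY ` F_set (sep_prod X aX Y aY) (prod_act aX aY)"
proof -
  have MX: "is_Mset Perm X aX" using NX by (simp add: nominal_def)
  have MY: "is_Mset Perm Y aY" using NY by (simp add: nominal_def)
  obtain m1 x where m1: "m1 \<in> Sb" "x \<in> X" "c1 = F_cls X aX m1 x" using c1 unfolding F_set_iff by blast
  obtain m2 y where m2: "m2 \<in> Sb" "y \<in> Y" "c2 = F_cls Y aY m2 y" using c2 unfolding F_set_iff by blast
  define C where "C = supp aX x"
  define D where "D = supp aY y"
  have fC: "finite C" using supp_props(1)[OF inf NX m1(2)] by (simp add: C_def)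
  have fD: "finite D" using supp_props(1)[OF inf NY m2(2)] by (simp add: D_def)
  obtain \<tau> where t: "\<tau> \<in> Perm" "\<forall>b\<in>D - {}. \<tau> b \<notin> C"
    using fresh_perm[OF inf finite.emptyI fD fC] by blast
  define y' where "y' = aY \<tau> y"
  have y'Y: "y' \<in> Y" using Mset_in[OF MY t(1) m2(2)] by (simp add: y'_def)
  have sy': "supp aY y' = \<tau> ` D" using supp_perm[OF inf NY m2(2) t(1)] by (simp add: y'_def D_def)
  have disj: "C \<inter> \<tau> ` D = {}" using t(2) by blast
  define m where "m a = (if a \<in> C then m1 a else if a \<in> \<tau> ` D then m2 (inv \<tau> a) else a)" for a
  have "{a. m a \<noteq> a} \<subseteq> C \<union> \<tau> ` D" by (auto simp: m_def)
  then have mSb: "m \<in> Sb" unfolding Sb_def using fC fD by (auto intro: finite_subset)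
  have m2i: "m2 \<circ> inv \<tau> \<in> Sb" using Sb_comp[OF m2(1) Perm_Sb[OF Perm_inv[OF t(1)]]] .
  have "((m, x), (m1, x)) \<in> F_rel X aX"
    by (rule F_rel.F_supp[OF mSb m1(1) m1(2) fC supp_props(2)[OF inf NX m1(2), folded C_def]]) (simp add: m_def)
  then have e1: "F_cls X aX m x = c1" using F_cls_eq[OF MX] m1(3) by simp
  have "\<forall>a\<in>\<tau> ` D. m a = (m2 \<circ> inv \<tau>) a" using disj by (auto simp: m_def)
  then have "((m, y'), (m2 \<circ> inv \<tau>, y')) \<in> F_rel Y aY"
    using F_rel.F_supp[OF mSb m2i y'Y _ supp_props(2)[OF inf NY y'Y, unfolded sy']] fD by blast
  moreover have "((m2 \<circ> inv \<tau>, y'), (m2 \<circ> inv \<tau> \<circ> \<tau>, y)) \<in> F_rel Y aY"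
    unfolding y'_def by (rule F_rel.F_perm[OF m2i t(1) m2(2)])
  moreover have "m2 \<circ> inv \<tau> \<circ> \<tau> = m2" using Perm_inv_l[OF t(1)] by (simp add: comp_assoc)
  ultimately have "((m, y'), (m2, y)) \<in> F_rel Y aY" using F_rel.F_trans by metis
  then have e2: "F_cls Y aY m y' = c2" using F_cls_eq[OF MY] m2(3) by simp
  have "separated aX aY x y'"
    using supp_sep[OF inf NX NY m1(2) y'Y] sy' disj by (simp add: C_def)
  then have xy: "(x, y') \<in> sep_prod X aX Y aY" using m1(2) y'Y by (simp add: sep_prod_def)
  have "p_map X aX Y aY (F_cls (sep_prod X aX Y aY) (prod_act aX aY) m (x, y')) = (c1, c2)"
    using p_map_cls[OF MX MY mSb xy] e1 e2 by simp
  moreover have "F_cls (sep_prod X aX Y aY) (prod_act aX aY) m (x, y') \<in> F_set (sep_prod X aX Y aY) (prod_act aX aY)"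
    by (rule F_cls_in[OF mSb xy])
  ultimately show ?thesis by (metis image_eqI)
qed

lemma inj_part:
  fixes aX :: "('a \<Rightarrow> 'a) \<Rightarrow> 'x \<Rightarrow> 'x" and aY :: "('a \<Rightarrow> 'a) \<Rightarrow> 'y \<Rightarrow> 'y"
  assumes inf: "infinite (UNIV :: 'a set)" and NX: "nominal Perm X aX" and NY: "nominal Perm Y aY"
  shows "inj_on (p_map X aX Y aY) (F_set (sep_prod X aX Y aY) (prod_act aX aY))"
proof (rule inj_onI)
  have MX: "is_Mset Perm X aX" using NX by (simp add: nominal_def)
  have MY: "is_Mset Perm Y aY" using NY by (simp add: nominal_def)
  have MS: "is_Mset Perm (sep_prod X aX Y aY) (prod_act aX aY)" using sep_Mset[OF MX MY] .
  fix c1 c2 assume c1: "c1 \<in> F_set (sep_prod X aX Y aY) (prod_act aX aY)"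
    and c2: "c2 \<in> F_set (sep_prod X aX Y aY) (prod_act aX aY)"
    and e: "p_map X aX Y aY c1 = p_map X aX Y aY c2"
  obtain m p where mp: "m \<in> Sb" "p \<in> sep_prod X aX Y aY" "c1 = F_cls (sep_prod X aX Y aY) (prod_act aX aY) m p"
    using c1 unfolding F_set_iff by blast
  obtain m' p' where mp': "m' \<in> Sb" "p' \<in> sep_prod X aX Y aY" "c2 = F_cls (sep_prod X aX Y aY) (prod_act aX aY) m' p'"
    using c2 unfolding F_set_iff by blast
  obtain x y where p: "p = (x, y)" by (metis surj_pair)
  obtain x' y' where p': "p' = (x', y')" by (metis surj_pair)
  have x: "x \<in> X" and y: "y \<in> Y" and sxy: "separated aX aY x y" using mp(2) p by (auto simp: sep_prod_def)
  have x': "x' \<in> X" and y': "y' \<in> Y" and sxy': "separated aX aY x' y'" using mp'(2) p' by (auto simp: sep_prod_def)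
  have "p_map X aX Y aY c1 = (F_cls X aX m x, F_cls Y aY m y)"
    unfolding mp(3) p by (rule p_map_cls[OF MX MY mp(1) mp(2)[unfolded p]])
  moreover have "p_map X aX Y aY c2 = (F_cls X aX m' x', F_cls Y aY m' y')"
    unfolding mp'(3) p' by (rule p_map_cls[OF MX MY mp'(1) mp'(2)[unfolded p']])
  ultimately have "F_cls X aX m x = F_cls X aX m' x'" and "F_cls Y aY m y = F_cls Y aY m' y'"
    using e by simp_all
  then have ex: "((m, x), (m', x')) \<in> F_rel X aX" and ey: "((m, y), (m', y')) \<in> F_rel Y aY"
    using F_cls_eq_iff[OF MX mp(1) mp'(1) x x'] F_cls_eq_iff[OF MY mp(1) mp'(1) y y'] by blast+
  obtain g where g: "g \<in> Perm" "x' = aX g x" "\<forall>a\<in>supp aX x. m a = m' (g a)"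
    using F_rel_S[OF inf NX ex] by auto
  obtain h where h: "h \<in> Perm" "y' = aY h y" "\<forall>a\<in>supp aY y. m a = m' (h a)"
    using F_rel_S[OF inf NY ey] by auto
  have d1: "supp aX x \<inter> supp aY y = {}" using supp_sep[OF inf NX NY x y] sxy by simp
  have d2: "supp aX x' \<inter> supp aY y' = {}" using supp_sep[OF inf NX NY x' y'] sxy' by simp
  have sx': "supp aX x' = g ` supp aX x" using supp_perm[OF inf NX x g(1)] g(2) by simp
  have sy': "supp aY y' = h ` supp aY y" using supp_perm[OF inf NY y h(1)] h(2) by simp
  define f where "f a = (if a \<in> supp aX x then g a else h a)" for a
  have gi: "inj g" using Perm_bij[OF g(1)] bij_is_inj by blast
  have hi: "inj h" using Perm_bij[OF h(1)] bij_is_inj by blast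
  have "inj_on f (supp aX x \<union> supp aY y)"
  proof (rule inj_onI)
    fix a b assume a: "a \<in> supp aX x \<union> supp aY y" and b: "b \<in> supp aX x \<union> supp aY y" and fe: "f a = f b"
    show "a = b"
    proof (cases "a \<in> supp aX x")
      case True
      show ?thesis
      proof (cases "b \<in> supp aX x")
        case True
        then have "g a = g b" using fe \<open>a \<in> supp aX x\<close> by (simp add: f_def)
        then show ?thesis using gi by (simp add: inj_eq)
      next
        case False
        then have "b \<in> supp aY y" using b by blast
        then have "f b \<in> supp aY y'" using False sy' by (simp add: f_def)
        moreover have "f a \<in> supp aX x'" using True sx' by (simp add: f_def)
        ultimately have "f a \<in> supp aX x' \<inter> supp aY y'" using fe by simp
        then show ?thesis using d2 by simp
      qed
    next
      case False
      then have ay: "a \<in> supp aY y" using a by blast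
      then have fa: "f a \<in> supp aY y'" using False sy' by (simp add: f_def)
      show ?thesis
      proof (cases "b \<in> supp aX x")
        case True
        then have "f b \<in> supp aX x'" using sx' by (simp add: f_def)
        then have "f a \<in> supp aX x' \<inter> supp aY y'" using fe fa by simp
        then show ?thesis using d2 by simp
      next
        case False
        then have "h a = h b" using fe \<open>a \<notin> supp aX x\<close> by (simp add: f_def)
        then show ?thesis using hi by (simp add: inj_eq)
      qed
    qed
  qed
  moreover have "finite (supp aX x \<union> supp aY y)"
    using supp_props(1)[OF inf NX x] supp_props(1)[OF inf NY y] by simp
  ultimately obtain k where k: "k \<in> Perm" "\<forall>a\<in>supp aX x \<union> supp aY y. k a = f a"
    using extend_perm by blast
  have kg: "\<And>a. a \<in> supp aX x \<Longrightarrow> k a = g a" using k(2) by (simp add: f_def)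
  have kh: "\<And>a. a \<in> supp aY y \<Longrightarrow> k a = h a" using k(2) d1 by (auto simp: f_def)
  have kx: "aX k x = x'" using is_supportD[OF supp_props(2)[OF inf NX x] k(1) g(1) kg] g(2) by simp
  have ky: "aY k y = y'" using is_supportD[OF supp_props(2)[OF inf NY y] k(1) h(1) kh] h(2) by simp
  define E where "E = supp aX x \<union> supp aY y"
  have sE: "is_support Perm (prod_act aX aY) E (x, y)"
    unfolding pair_support E_def
    using support_mono[OF supp_props(2)[OF inf NX x]] support_mono[OF supp_props(2)[OF inf NY y]] by blast
  have fE: "finite E" using \<open>finite (supp aX x \<union> supp aY y)\<close> by (simp add: E_def)
  have mk: "m' \<circ> k \<in> Sb" using Sb_comp[OF mp'(1) Perm_Sb[OF k(1)]] .
  have agree: "\<forall>a\<in>E. m a = (m' \<circ> k) a" using g(3) h(3) kg kh by (auto simp: E_def)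
  have r1: "((m, (x, y)), (m' \<circ> k, (x, y))) \<in> F_rel (sep_prod X aX Y aY) (prod_act aX aY)"
    by (rule F_rel.F_supp[OF mp(1) mk mp(2)[unfolded p] fE sE agree])
  have r2: "((m', prod_act aX aY k (x, y)), (m' \<circ> k, (x, y))) \<in> F_rel (sep_prod X aX Y aY) (prod_act aX aY)"
    by (rule F_rel.F_perm[OF mp'(1) k(1) mp(2)[unfolded p]])
  have "prod_act aX aY k (x, y) = (x', y')" using kx ky by (simp add: prod_act_def)
  then have "((m', (x', y')), (m' \<circ> k, (x, y))) \<in> F_rel (sep_prod X aX Y aY) (prod_act aX aY)"
    using r2 by simp
  then have "((m, (x, y)), (m', (x', y'))) \<in> F_rel (sep_prod X aX Y aY) (prod_act aX aY)"
    by (rule F_rel.F_trans[OF r1 F_rel.F_sym])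
  then have "F_cls (sep_prod X aX Y aY) (prod_act aX aY) m (x, y) = F_cls (sep_prod X aX Y aY) (prod_act aX aY) m' (x', y')"
    by (rule F_cls_eq[OF MS])
  then show "c1 = c2" using mp(3) mp'(3) p p' by simp
qed

lemma equiv_part:
  fixes aX :: "('a \<Rightarrow> 'a) \<Rightarrow> 'x \<Rightarrow> 'x" and aY :: "('a \<Rightarrow> 'a) \<Rightarrow> 'y \<Rightarrow> 'y"
  assumes MX: "is_Mset Perm X aX" and MY: "is_Mset Perm Y aY"
  shows "equivariant Sb
         (F_set (sep_prod X aX Y aY) (prod_act aX aY)) (F_act (sep_prod X aX Y aY) (prod_act aX aY))
         (F_set X aX \<times> F_set Y aY) (prod_act (F_act X aX) (F_act Y aY))
         (p_map X aX Y aY)"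
  unfolding equivariant_def
proof (intro conjI ballI)
  have MS: "is_Mset Perm (sep_prod X aX Y aY) (prod_act aX aY)" using sep_Mset[OF MX MY] .
  fix c assume c: "c \<in> F_set (sep_prod X aX Y aY) (prod_act aX aY)"
  obtain m p where mp: "m \<in> Sb" "p \<in> sep_prod X aX Y aY" "c = F_cls (sep_prod X aX Y aY) (prod_act aX aY) m p"
    using c unfolding F_set_iff by blast
  obtain x y where p: "p = (x, y)" by (metis surj_pair)
  have x: "x \<in> X" and y: "y \<in> Y" using mp(2) p by (auto simp: sep_prod_def)
  have pc: "p_map X aX Y aY c = (F_cls X aX m x, F_cls Y aY m y)"
    unfolding mp(3) p by (rule p_map_cls[OF MX MY mp(1) mp(2)[unfolded p]])
  show "p_map X aX Y aY c \<in> F_set X aX \<times> F_set Y aY"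
    unfolding pc using F_cls_in[OF mp(1) x] F_cls_in[OF mp(1) y] by blast
  {
    fix n :: "'a \<Rightarrow> 'a" assume n: "n \<in> Sb"
    have nm: "n \<circ> m \<in> Sb" using Sb_comp[OF n mp(1)] .
    have "F_act (sep_prod X aX Y aY) (prod_act aX aY) n c = F_cls (sep_prod X aX Y aY) (prod_act aX aY) (n \<circ> m) (x, y)"
      unfolding mp(3) p by (rule F_act_cls[OF MS n mp(1) mp(2)[unfolded p]])
    then have "p_map X aX Y aY (F_act (sep_prod X aX Y aY) (prod_act aX aY) n c) = (F_cls X aX (n \<circ> m) x, F_cls Y aY (n \<circ> m) y)"
      using p_map_cls[OF MX MY nm mp(2)[unfolded p]] by simp
    moreover have "prod_act (F_act X aX) (F_act Y aY) n (p_map X aX Y aY c) = (F_cls X aX (n \<circ> m) x, F_cls Y aY (n \<circ> m) y)"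
      unfolding pc prod_act_def using F_act_cls[OF MX n mp(1) x] F_act_cls[OF MY n mp(1) y] by simp
    ultimately have "p_map X aX Y aY (F_act (sep_prod X aX Y aY) (prod_act aX aY) n c) = prod_act (F_act X aX) (F_act Y aY) n (p_map X aX Y aY c)"
      by simp
  }
  then show "\<And>n. n \<in> Sb \<Longrightarrow> p_map X aX Y aY (F_act (sep_prod X aX Y aY) (prod_act aX aY) n c) = prod_act (F_act X aX) (F_act Y aY) n (p_map X aX Y aY c)"
    by blast
qed

lemma equivariant_pairmap:
  fixes aX :: "('a \<Rightarrow> 'a) \<Rightarrow> 'x \<Rightarrow> 'x" and aY :: "('a \<Rightarrow> 'a) \<Rightarrow> 'y \<Rightarrow> 'y"
  assumes ef: "equivariant Perm X aX X' aX' f" and eg: "equivariant Perm Y aY Y' aY' g"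
  shows "equivariant Perm (sep_prod X aX Y aY) (prod_act aX aY) (sep_prod X' aX' Y' aY') (prod_act aX' aY')
           (\<lambda>(x, y). (f x, g y))"
  unfolding equivariant_def
proof (intro conjI ballI)
  fix p assume p: "p \<in> sep_prod X aX Y aY"
  obtain x y where xy: "p = (x, y)" by (metis surj_pair)
  have x: "x \<in> X" and y: "y \<in> Y" and s: "separated aX aY x y" using p xy by (auto simp: sep_prod_def)
  obtain C D where CD: "finite C" "finite D" "C \<inter> D = {}" "is_support Perm aX C x" "is_support Perm aY D y"
    using s unfolding separated_def by blast
  have "separated aX' aY' (f x) (g y)" unfolding separated_def
    using equivariant_support[OF ef x CD(4)] equivariant_support[OF eg y CD(5)] CD(1-3) by blast
  then show "(\<lambda>(x, y). (f x, g y)) p \<in> sep_prod X' aX' Y' aY'"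
    using equivariantD1[OF ef x] equivariantD1[OF eg y] xy by (simp add: sep_prod_def)
  fix m :: "'a \<Rightarrow> 'a" assume m: "m \<in> Perm"
  show "(\<lambda>(x, y). (f x, g y)) (prod_act aX aY m p) = prod_act aX' aY' m ((\<lambda>(x, y). (f x, g y)) p)"
    using equivariantD2[OF ef m x] equivariantD2[OF eg m y] xy by (simp add: prod_act_def)
qed

lemma nat_part:
  assumes MX: "is_Mset Perm X aX" and MY: "is_Mset Perm Y aY"
    and MX': "is_Mset Perm X' aX'" and MY': "is_Mset Perm Y' aY'"
    and ef: "equivariant Perm X aX X' aX' f" and eg: "equivariant Perm Y aY Y' aY' g"
    and c: "c \<in> F_set (sep_prod X aX Y aY) (prod_act aX aY)"
  shows "p_map X' aX' Y' aY'
            (F_map (sep_prod X' aX' Y' aY') (prod_act aX' aY') (\<lambda>(x, y). (f x, g y)) c)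
          = (F_map X' aX' f (fst (p_map X aX Y aY c)), F_map Y' aY' g (snd (p_map X aX Y aY c)))"
proof -
  have MS': "is_Mset Perm (sep_prod X' aX' Y' aY') (prod_act aX' aY')" using sep_Mset[OF MX' MY'] .
  obtain m p where mp: "m \<in> Sb" "p \<in> sep_prod X aX Y aY" "c = F_cls (sep_prod X aX Y aY) (prod_act aX aY) m p"
    using c unfolding F_set_iff by blast
  obtain x y where p: "p = (x, y)" by (metis surj_pair)
  have x: "x \<in> X" and y: "y \<in> Y" using mp(2) p by (auto simp: sep_prod_def)
  have pc: "p_map X aX Y aY c = (F_cls X aX m x, F_cls Y aY m y)"
    unfolding mp(3) p by (rule p_map_cls[OF MX MY mp(1) mp(2)[unfolded p]])
  have e: "equivariant Perm (sep_prod X aX Y aY) (prod_act aX aY) (sep_prod X' aX' Y' aY') (prod_act aX' aY')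
           (\<lambda>(x, y). (f x, g y))" by (rule equivariant_pairmap[OF ef eg])
  have fm: "F_map (sep_prod X' aX' Y' aY') (prod_act aX' aY') (\<lambda>(x, y). (f x, g y)) c
      = F_cls (sep_prod X' aX' Y' aY') (prod_act aX' aY') m (f x, g y)"
    unfolding mp(3) p using F_map_cls[OF MS' e mp(1) mp(2)[unfolded p]] by simp
  have mem: "(f x, g y) \<in> sep_prod X' aX' Y' aY'" using equivariantD1[OF e mp(2)[unfolded p]] by simp
  show ?thesis unfolding fm pc using p_map_cls[OF MX' MY' mp(1) mem] F_map_cls[OF MX' ef mp(1) x]
      F_map_cls[OF MY' eg mp(1) y] by simp
qed

lemma assoc_equivariant:
  fixes aX :: "('a \<Rightarrow> 'a) \<Rightarrow> 'x \<Rightarrow> 'x" and aY :: "('a \<Rightarrow> 'a) \<Rightarrow> 'y \<Rightarrow> 'y" and aZ :: "('a \<Rightarrow> 'a) \<Rightarrow> 'z \<Rightarrow> 'z"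
  assumes inf: "infinite (UNIV :: 'a set)" and NX: "nominal Perm X aX" and NY: "nominal Perm Y aY"
    and NZ: "nominal Perm Z aZ"
  shows "equivariant Perm (sep_prod (sep_prod X aX Y aY) (prod_act aX aY) Z aZ) (prod_act (prod_act aX aY) aZ)
     (sep_prod X aX (sep_prod Y aY Z aZ) (prod_act aY aZ)) (prod_act aX (prod_act aY aZ))
     (\<lambda>((x, y), z). (x, (y, z)))"
  unfolding equivariant_def
proof (intro conjI ballI)
  fix q assume q: "q \<in> sep_prod (sep_prod X aX Y aY) (prod_act aX aY) Z aZ"
  obtain x y z where xyz: "q = ((x, y), z)" by (metis surj_pair)
  have x: "x \<in> X" and y: "y \<in> Y" and z: "z \<in> Z" and sxy: "separated aX aY x y"
    and sxyz: "separated (prod_act aX aY) aZ (x, y) z" using q xyz by (auto simp: sep_prod_def)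
  obtain E D where ED: "finite E" "finite D" "E \<inter> D = {}" "is_support Perm (prod_act aX aY) E (x, y)"
    "is_support Perm aZ D z"
    using sxyz unfolding separated_def by blast
  have Ex: "is_support Perm aX E x" and Ey: "is_support Perm aY E y" using ED(4) unfolding pair_support by simp_all
  have syz: "separated aY aZ y z" unfolding separated_def using ED(1,2,3,5) Ey by blast
  have sx: "supp aX x \<subseteq> E" using supp_props(3)[OF inf NX x ED(1) Ex] .
  have sz: "supp aZ z \<subseteq> D" using supp_props(3)[OF inf NZ z ED(2) ED(5)] .
  have d: "supp aX x \<inter> supp aY y = {}" using supp_sep[OF inf NX NY x y] sxy by simp
  have "is_support Perm (prod_act aY aZ) (supp aY y \<union> supp aZ z) (y, z)"
    unfolding pair_support
    using support_mono[OF supp_props(2)[OF inf NY y]] support_mono[OF supp_props(2)[OF inf NZ z]] by blast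
  moreover have "finite (supp aY y \<union> supp aZ z)" using supp_props(1)[OF inf NY y] supp_props(1)[OF inf NZ z] by simp
  moreover have "supp aX x \<inter> (supp aY y \<union> supp aZ z) = {}" using d sx sz ED(3) by blast
  ultimately have "separated aX (prod_act aY aZ) x (y, z)" unfolding separated_def
    using supp_props(1,2)[OF inf NX x] by blast
  then show "(\<lambda>((x, y), z). (x, (y, z))) q \<in> sep_prod X aX (sep_prod Y aY Z aZ) (prod_act aY aZ)"
    using x y z syz xyz by (simp add: sep_prod_def)
  fix m :: "'a \<Rightarrow> 'a" assume m: "m \<in> Perm"
  show "(\<lambda>((x, y), z). (x, (y, z))) (prod_act (prod_act aX aY) aZ m q) = prod_act aX (prod_act aY aZ) m ((\<lambda>((x, y), z). (x, (y, z))) q)"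
    using xyz by (simp add: prod_act_def)
qed

lemma assoc_part:
  fixes aX :: "('a \<Rightarrow> 'a) \<Rightarrow> 'x \<Rightarrow> 'x" and aY :: "('a \<Rightarrow> 'a) \<Rightarrow> 'y \<Rightarrow> 'y" and aZ :: "('a \<Rightarrow> 'a) \<Rightarrow> 'z \<Rightarrow> 'z"
  assumes inf: "infinite (UNIV :: 'a set)" and NX: "nominal Perm X aX" and NY: "nominal Perm Y aY"
    and NZ: "nominal Perm Z aZ"
    and c: "c \<in> F_set (sep_prod (sep_prod X aX Y aY) (prod_act aX aY) Z aZ) (prod_act (prod_act aX aY) aZ)"
  shows "let (c12, c3) = p_map (sep_prod X aX Y aY) (prod_act aX aY) Z aZ c;
              (c1, c2) = p_map X aX Y aY c12;
              c' = F_map (sep_prod X aX (sep_prod Y aY Z aZ) (prod_act aY aZ)) (prod_act aX (prod_act aY aZ))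
                     (\<lambda>((x, y), z). (x, (y, z))) c;
              (d1, d23) = p_map X aX (sep_prod Y aY Z aZ) (prod_act aY aZ) c';
              (d2, d3) = p_map Y aY Z aZ d23
          in (c1, c2, c3) = (d1, d2, d3)"
proof -
  have MX: "is_Mset Perm X aX" using NX by (simp add: nominal_def)
  have MY: "is_Mset Perm Y aY" using NY by (simp add: nominal_def)
  have MZ: "is_Mset Perm Z aZ" using NZ by (simp add: nominal_def)
  have MXY: "is_Mset Perm (sep_prod X aX Y aY) (prod_act aX aY)" using sep_Mset[OF MX MY] .
  have MYZ: "is_Mset Perm (sep_prod Y aY Z aZ) (prod_act aY aZ)" using sep_Mset[OF MY MZ] .
  have MXYZ: "is_Mset Perm (sep_prod X aX (sep_prod Y aY Z aZ) (prod_act aY aZ)) (prod_act aX (prod_act aY aZ))"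
    using sep_Mset[OF MX MYZ] .
  note e = assoc_equivariant[OF inf NX NY NZ]
  obtain m q where mq: "m \<in> Sb" "q \<in> sep_prod (sep_prod X aX Y aY) (prod_act aX aY) Z aZ"
    "c = F_cls (sep_prod (sep_prod X aX Y aY) (prod_act aX aY) Z aZ) (prod_act (prod_act aX aY) aZ) m q"
    using c unfolding F_set_iff by blast
  obtain x y z where q: "q = ((x, y), z)" by (metis surj_pair)
  have xy: "(x, y) \<in> sep_prod X aX Y aY" using mq(2) q by (simp add: sep_prod_def)
  have q': "(x, (y, z)) \<in> sep_prod X aX (sep_prod Y aY Z aZ) (prod_act aY aZ)"
    using equivariantD1[OF e mq(2)] q by simp
  have yz: "(y, z) \<in> sep_prod Y aY Z aZ" using q' by (simp add: sep_prod_def)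
  have e1: "p_map (sep_prod X aX Y aY) (prod_act aX aY) Z aZ c
      = (F_cls (sep_prod X aX Y aY) (prod_act aX aY) m (x, y), F_cls Z aZ m z)"
    unfolding mq(3) q by (rule p_map_cls[OF MXY MZ mq(1) mq(2)[unfolded q]])
  have e2: "p_map X aX Y aY (F_cls (sep_prod X aX Y aY) (prod_act aX aY) m (x, y)) = (F_cls X aX m x, F_cls Y aY m y)"
    by (rule p_map_cls[OF MX MY mq(1) xy])
  have e3: "F_map (sep_prod X aX (sep_prod Y aY Z aZ) (prod_act aY aZ)) (prod_act aX (prod_act aY aZ))
                     (\<lambda>((x, y), z). (x, (y, z))) c
      = F_cls (sep_prod X aX (sep_prod Y aY Z aZ) (prod_act aY aZ)) (prod_act aX (prod_act aY aZ)) m (x, (y, z))"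
    unfolding mq(3) q using F_map_cls[OF MXYZ e mq(1) mq(2)[unfolded q]] by simp
  have e4: "p_map X aX (sep_prod Y aY Z aZ) (prod_act aY aZ)
      (F_cls (sep_prod X aX (sep_prod Y aY Z aZ) (prod_act aY aZ)) (prod_act aX (prod_act aY aZ)) m (x, (y, z)))
      = (F_cls X aX m x, F_cls (sep_prod Y aY Z aZ) (prod_act aY aZ) m (y, z))"
    by (rule p_map_cls[OF MX MYZ mq(1) q'])
  have e5: "p_map Y aY Z aZ (F_cls (sep_prod Y aY Z aZ) (prod_act aY aZ) m (y, z)) = (F_cls Y aY m y, F_cls Z aZ m z)"
    by (rule p_map_cls[OF MY MZ mq(1) yz])
  show ?thesis unfolding Let_def e1 e3 by (simp add: e2 e4 e5)
qed

theorem mainTheorem2: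
  fixes X :: "'x set" and aX :: "('a::countable \<Rightarrow> 'a) \<Rightarrow> 'x \<Rightarrow> 'x"
    and Y :: "'y set" and aY :: "('a \<Rightarrow> 'a) \<Rightarrow> 'y \<Rightarrow> 'y"
    and Z :: "'z set" and aZ :: "('a \<Rightarrow> 'a) \<Rightarrow> 'z \<Rightarrow> 'z"
    and X' :: "'u set" and aX' :: "('a \<Rightarrow> 'a) \<Rightarrow> 'u \<Rightarrow> 'u"
    and Y' :: "'v set" and aY' :: "('a \<Rightarrow> 'a) \<Rightarrow> 'v \<Rightarrow> 'v"
    and f :: "'x \<Rightarrow> 'u" and g :: "'y \<Rightarrow> 'v"
  assumes atoms: "infinite (UNIV :: 'a set)"
    and nX: "nominal Perm X aX" and nY: "nominal Perm Y aY" and nZ: "nominal Perm Z aZ"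
    and nX': "nominal Perm X' aX'" and nY': "nominal Perm Y' aY'"
    and ef: "equivariant Perm X aX X' aX' f" and eg: "equivariant Perm Y aY Y' aY' g"
  shows
    \<comment> \<open>unit: F(1) is (isomorphic to) the terminal nominal Sb-set 1\<close>
    "(\<exists>z. F_set ({()} :: unit set) (\<lambda>(_ :: 'a \<Rightarrow> 'a) u. u) = {z})
     \<comment> \<open>p is an isomorphism of nominal Sb-sets F(X (x) Y) -> F(X) x F(Y)\<close>
     \<and> bij_betw (p_map X aX Y aY)
         (F_set (sep_prod X aX Y aY) (prod_act aX aY)) (F_set X aX \<times> F_set Y aY)
     \<and> equivariant Sb
         (F_set (sep_prod X aX Y aY) (prod_act aX aY)) (F_act (sep_prod X aX Y aY) (prod_act aX aY))
         (F_set X aX \<times> F_set Y aY) (prod_act (F_act X aX) (F_act Y aY))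
         (p_map X aX Y aY)
     \<comment> \<open>naturality in X and Y\<close>
     \<and> (\<forall>c \<in> F_set (sep_prod X aX Y aY) (prod_act aX aY).
          p_map X' aX' Y' aY'
            (F_map (sep_prod X' aX' Y' aY') (prod_act aX' aY') (\<lambda>(x, y). (f x, g y)) c)
          = (F_map X' aX' f (fst (p_map X aX Y aY c)), F_map Y' aY' g (snd (p_map X aX Y aY c))))
     \<comment> \<open>associativity coherence\<close>
     \<and> (\<forall>c \<in> F_set (sep_prod (sep_prod X aX Y aY) (prod_act aX aY) Z aZ) (prod_act (prod_act aX aY) aZ).
          let (c12, c3) = p_map (sep_prod X aX Y aY) (prod_act aX aY) Z aZ c;
              (c1, c2) = p_map X aX Y aY c12;
              c' = F_map (sep_prod X aX (sep_prod Y aY Z aZ) (prod_act aY aZ)) (prod_act aX (prod_act aY aZ))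
                     (\<lambda>((x, y), z). (x, (y, z))) c;
              (d1, d23) = p_map X aX (sep_prod Y aY Z aZ) (prod_act aY aZ) c';
              (d2, d3) = p_map Y aY Z aZ d23
          in (c1, c2, c3) = (d1, d2, d3))"
proof (intro conjI ballI)
  have MX: "is_Mset Perm X aX" using nX by (simp add: nominal_def)
  have MY: "is_Mset Perm Y aY" using nY by (simp add: nominal_def)
  have MX': "is_Mset Perm X' aX'" using nX' by (simp add: nominal_def)
  have MY': "is_Mset Perm Y' aY'" using nY' by (simp add: nominal_def)
  show "\<exists>z. F_set ({()} :: unit set) (\<lambda>(_ :: 'a \<Rightarrow> 'a) u. u) = {z}" by (rule unit_part)
  have "p_map X aX Y aY ` F_set (sep_prod X aX Y aY) (prod_act aX aY) = F_set X aX \<times> F_set Y aY"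
  proof
    show "p_map X aX Y aY ` F_set (sep_prod X aX Y aY) (prod_act aX aY) \<subseteq> F_set X aX \<times> F_set Y aY"
      using equiv_part[OF MX MY] unfolding equivariant_def by blast
    show "F_set X aX \<times> F_set Y aY \<subseteq> p_map X aX Y aY ` F_set (sep_prod X aX Y aY) (prod_act aX aY)"
      using surj_part[OF atoms nX nY] by blast
  qed
  then show "bij_betw (p_map X aX Y aY) (F_set (sep_prod X aX Y aY) (prod_act aX aY)) (F_set X aX \<times> F_set Y aY)"
    using inj_part[OF atoms nX nY] by (simp add: bij_betw_def)
  show "equivariant Sb
         (F_set (sep_prod X aX Y aY) (prod_act aX aY)) (F_act (sep_prod X aX Y aY) (prod_act aX aY))
         (F_set X aX \<times> F_set Y aY) (prod_act (F_act X aX) (F_act Y aY))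
         (p_map X aX Y aY)" by (rule equiv_part[OF MX MY])
  fix c assume "c \<in> F_set (sep_prod X aX Y aY) (prod_act aX aY)"
  then show "p_map X' aX' Y' aY'
            (F_map (sep_prod X' aX' Y' aY') (prod_act aX' aY') (\<lambda>(x, y). (f x, g y)) c)
          = (F_map X' aX' f (fst (p_map X aX Y aY c)), F_map Y' aY' g (snd (p_map X aX Y aY c)))"
    by (rule nat_part[OF MX MY MX' MY' ef eg])
next
  fix c assume "c \<in> F_set (sep_prod (sep_prod X aX Y aY) (prod_act aX aY) Z aZ) (prod_act (prod_act aX aY) aZ)"
  then show "let (c12, c3) = p_map (sep_prod X aX Y aY) (prod_act aX aY) Z aZ c;
              (c1, c2) = p_map X aX Y aY c12;
              c' = F_map (sep_prod X aX (sep_prod Y aY Z aZ) (prod_act aY aZ)) (prod_act aX (prod_act aY aZ))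
                     (\<lambda>((x, y), z). (x, (y, z))) c;
              (d1, d23) = p_map X aX (sep_prod Y aY Z aZ) (prod_act aY aZ) c';
              (d2, d3) = p_map Y aY Z aZ d23
          in (c1, c2, c3) = (d1, d2, d3)"
    by (rule assoc_part[OF atoms nX nY nZ])
qed

end
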